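(* Let $n\ge k\ge 2$ be integers. Then \[ \mathsf{opt}_{\operatorname{bandit}}^{\operatorname{obl}}(n,k)\ge \frac{k-1}{2}\left\lfloor \log_k n\right\rfloor. \]
   Context: Prediction with expert advice in the realizable case: $\mathcal{Y}=\{1,\dots,k\}$, $\mathcal{X}=[k]^n$, experts $h_i(x)=x_i$, $i=1,\dots,n$. $\mathcal{P}_0$ is the set of finite sequences of examples in $\mathcal{X}\times\mathcal{Y}$ consistent with some $h_i$. Bandit feedback against an oblivious adversary: the adversary fixes $S\in\mathcal{P}_0$ in advance; in round $t$ the learner receives the instance $x_t$ of $S$, draws $\hat y_t$ from a distribution depending on past observations and $x_t$, and learns only whether $\hat y_t$ equals the label $y_t$ of $S$. $\mathsf{opt}_{\operatorname{bandit}}^{\operatorname{obl}}(n,k)=\inf_{\text{learner}}\sup_{S\in\mathcal{P}_0}$ expected number of mistakes ($\hat y_t\ne y_t$). *)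

theory Defs
  imports "HOL-Probability.Probability_Mass_Function"
begin

text \<open>Instances are lists of length n with entries in {1..k}; expert i (0-based index
  i < n, corresponding to the paper's h_(i+1)) predicts the i-th coordinate.\<close>

definition instance_ok :: "nat \<Rightarrow> nat \<Rightarrow> nat list \<Rightarrow> bool" where
  "instance_ok n k x \<longleftrightarrow> length x = n \<and> set x \<subseteq> {1..k}"

definition realizable_seq :: "nat \<Rightarrow> nat \<Rightarrow> (nat list \<times> nat) list \<Rightarrow> bool" where
  "realizable_seq n k S \<longleftrightarrow>
     (\<forall>(x, y) \<in> set S. instance_ok n k x \<and> y \<in> {1..k}) \<and>
     (\<exists>i<n. \<forall>(x, y) \<in> set S. y = x ! i)"

text \<open>History of observations: instance, own prediction, bandit feedback (correct or not).\<close>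
type_synonym hist = "(nat list \<times> nat \<times> bool) list"

type_synonym learner = "hist \<Rightarrow> nat list \<Rightarrow> nat pmf"

definition valid_learner :: "nat \<Rightarrow> learner \<Rightarrow> bool" where
  "valid_learner k L \<longleftrightarrow> (\<forall>h x. set_pmf (L h x) \<subseteq> {1..k})"

fun exp_mistakes :: "learner \<Rightarrow> hist \<Rightarrow> (nat list \<times> nat) list \<Rightarrow> ennreal" where
  "exp_mistakes L h [] = 0"
| "exp_mistakes L h ((x, y) # S) =
     (\<integral>\<^sup>+ yh. (if yh = y then 0 else 1) + exp_mistakes L (h @ [(x, yh, yh = y)]) S
        \<partial>measure_pmf (L h x))"

definition opt_bandit_obl :: "nat \<Rightarrow> nat \<Rightarrow> ennreal" where
  "opt_bandit_obl n k =
     (INF L \<in> {L. valid_learner k L}. SUP S \<in> {S. realizable_seq n k S}. exp_mistakes L [] S)"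

end

theory Submission
  imports Defs
begin

definition gg :: "nat \<Rightarrow> nat \<Rightarrow> nat" where
  "gg c j = (\<Sum>p<c. min p j)"

lemma gg0: "gg c 0 = 0" by (simp add: gg_def)

lemma gg_out: "gg c (Suc j) \<le> c + gg c j"
proof -
  have "gg c (Suc j) \<le> (\<Sum>p<c. 1 + min p j)" unfolding gg_def
    by (intro sum_mono) auto
  also have "\<dots> = c + gg c j" unfolding gg_def by (induct c) auto
  finally show ?thesis .
qed

lemma gg_in: "gg (Suc m) (Suc j) = m + gg m j"
proof -
  have "gg (Suc m) (Suc j) = min 0 (Suc j) + (\<Sum>p<m. min (Suc p) (Suc j))"
    unfolding gg_def by (rule sum.lessThan_Suc_shift)
  also have "\<dots> = (\<Sum>p<m. 1 + min p j)" by simp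
  also have "\<dots> = m + gg m j" unfolding gg_def by (induct m) auto
  finally show ?thesis .
qed

lemma pmf_int_ge:
  assumes "\<And>z. c \<le> f z"
  shows "c \<le> (\<integral>\<^sup>+z. f z \<partial>measure_pmf p)"
proof -
  have "c = (\<integral>\<^sup>+z. c \<partial>measure_pmf p)"
    by (simp add: measure_pmf.emeasure_space_1)
  also have "\<dots> \<le> (\<integral>\<^sup>+z. f z \<partial>measure_pmf p)"
    by (intro nn_integral_mono assms)
  finally show ?thesis .
qed

lemma prefix_bound:
  assumes hT: "\<And>h. cT \<le> (\<Sum>i\<in>I. exp_mistakes L h (T i))"
  shows "cT \<le> (\<Sum>i\<in>I. exp_mistakes L h (R @ T i))"
proof (induction R arbitrary: h)
  case Nil
  then show ?case using hT by simp
next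
  case (Cons a R)
  obtain x y where a: "a = (x, y)" by force
  have "(\<Sum>i\<in>I. exp_mistakes L h (a # R @ T i)) =
     (\<integral>\<^sup>+ yh. (\<Sum>i\<in>I. (if yh = y then 0 else 1) + exp_mistakes L (h @ [(x, yh, yh = y)]) (R @ T i))
        \<partial>measure_pmf (L h x))"
    by (simp add: a nn_integral_sum)
  also have "cT \<le> \<dots>"
  proof (rule pmf_int_ge)
    fix z
    have "cT \<le> (\<Sum>i\<in>I. exp_mistakes L (h @ [(x, z, z = y)]) (R @ T i))" by (rule Cons.IH)
    also have "\<dots> \<le> (\<Sum>i\<in>I. (if z = y then 0 else 1) + exp_mistakes L (h @ [(x, z, z = y)]) (R @ T i))"
      by (intro sum_mono) simp
    finally show "cT \<le> \<dots>" .
  qed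
  finally show ?case by simp
qed

lemma block:
  assumes finI: "finite I"
    and hT: "\<And>h. cT \<le> (\<Sum>i\<in>I. exp_mistakes L h (T i))"
  shows "finite C \<Longrightarrow> of_nat (card I * gg (card C) j) + of_nat (card C) * cT
     \<le> (\<Sum>y\<in>C. \<Sum>i\<in>I. exp_mistakes L h (replicate j (x, y) @ T i))"
proof (induction j arbitrary: C h)
  case 0
  have "of_nat (card C) * cT = (\<Sum>y\<in>C. cT)" by simp
  also have "\<dots> \<le> (\<Sum>y\<in>C. \<Sum>i\<in>I. exp_mistakes L h (T i))"
    by (intro sum_mono hT)
  finally show ?case by (simp add: gg0)
next
  case (Suc j)
  define F where "F = (\<lambda>y i yh. (if yh = y then 0 else 1) +
        exp_mistakes L (h @ [(x, yh, yh = y)]) (replicate j (x, y) @ T i))"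
  have "(\<Sum>y\<in>C. \<Sum>i\<in>I. exp_mistakes L h (replicate (Suc j) (x, y) @ T i)) =
     (\<Sum>y\<in>C. \<Sum>i\<in>I. \<integral>\<^sup>+ yh. F y i yh \<partial>measure_pmf (L h x))"
    by (simp add: F_def)
  also have "\<dots> = (\<integral>\<^sup>+ yh. (\<Sum>y\<in>C. \<Sum>i\<in>I. F y i yh) \<partial>measure_pmf (L h x))"
    by (simp add: nn_integral_sum)
  finally have eq: "(\<Sum>y\<in>C. \<Sum>i\<in>I. exp_mistakes L h (replicate (Suc j) (x, y) @ T i)) =
     (\<integral>\<^sup>+ yh. (\<Sum>y\<in>C. \<Sum>i\<in>I. F y i yh) \<partial>measure_pmf (L h x))" .
  have "of_nat (card I * gg (card C) (Suc j)) + of_nat (card C) * cT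
     \<le> (\<integral>\<^sup>+ yh. (\<Sum>y\<in>C. \<Sum>i\<in>I. F y i yh) \<partial>measure_pmf (L h x))"
  proof (rule pmf_int_ge)
    fix z
    define h0 where "h0 = h @ [(x, z, False)]"
    show "of_nat (card I * gg (card C) (Suc j)) + of_nat (card C) * cT \<le> (\<Sum>y\<in>C. \<Sum>i\<in>I. F y i z)"
    proof (cases "z \<in> C")
      case False
      have "(\<Sum>y\<in>C. \<Sum>i\<in>I. F y i z) = (\<Sum>y\<in>C. \<Sum>i\<in>I. 1 + exp_mistakes L h0 (replicate j (x, y) @ T i))"
        using False by (intro sum.cong refl) (auto simp: F_def h0_def)
      also have "\<dots> = of_nat (card C * card I) + (\<Sum>y\<in>C. \<Sum>i\<in>I. exp_mistakes L h0 (replicate j (x, y) @ T i))"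
        by (simp add: sum.distrib)
      finally have e: "(\<Sum>y\<in>C. \<Sum>i\<in>I. F y i z) = \<dots>" .
      have "of_nat (card I * gg (card C) (Suc j)) \<le> (of_nat (card C * card I) + of_nat (card I * gg (card C) j) :: ennreal)"
      proof -
        have "card I * gg (card C) (Suc j) \<le> card C * card I + card I * gg (card C) j"
          using gg_out[of "card C" j] mult_le_mono2[OF gg_out[of "card C" j], of "card I"]
          by (simp add: algebra_simps)
        then show ?thesis by (metis of_nat_add of_nat_le_iff)
      qed
      then have "of_nat (card I * gg (card C) (Suc j)) + of_nat (card C) * cT \<le>
         of_nat (card C * card I) + (of_nat (card I * gg (card C) j) + of_nat (card C) * cT)"
        by (metis add.assoc add_right_mono)
      also have "\<dots> \<le> of_nat (card C * card I) + (\<Sum>y\<in>C. \<Sum>i\<in>I. exp_mistakes L h0 (replicate j (x, y) @ T i))"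
        using Suc.IH[OF Suc.prems, of h0] by (rule add_left_mono)
      finally show ?thesis using e by simp
    next
      case True
      obtain m where m: "card C = Suc m" using True Suc.prems
        by (metis card_gt_0_iff emptyE gr0_implies_Suc)
      have cm: "card (C - {z}) = m" using m True Suc.prems by simp
      have s: "(\<Sum>y\<in>C. \<Sum>i\<in>I. F y i z) = (\<Sum>i\<in>I. F z i z) + (\<Sum>y\<in>C - {z}. \<Sum>i\<in>I. F y i z)"
        using True Suc.prems by (simp add: sum.remove)
      have a: "cT \<le> (\<Sum>i\<in>I. F z i z)"
      proof -
        have "cT \<le> (\<Sum>i\<in>I. exp_mistakes L (h @ [(x, z, True)]) (replicate j (x, z) @ T i))"
          by (rule prefix_bound[OF hT])
        also have "\<dots> = (\<Sum>i\<in>I. F z i z)" by (simp add: F_def)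
        finally show ?thesis .
      qed
      have "(\<Sum>y\<in>C - {z}. \<Sum>i\<in>I. F y i z) = (\<Sum>y\<in>C - {z}. \<Sum>i\<in>I. 1 + exp_mistakes L h0 (replicate j (x, y) @ T i))"
        by (intro sum.cong refl) (auto simp: F_def h0_def)
      also have "\<dots> = of_nat (m * card I) + (\<Sum>y\<in>C - {z}. \<Sum>i\<in>I. exp_mistakes L h0 (replicate j (x, y) @ T i))"
        by (simp add: sum.distrib cm)
      finally have e: "(\<Sum>y\<in>C - {z}. \<Sum>i\<in>I. F y i z) = \<dots>" .
      have b: "of_nat (card I * gg m j) + of_nat m * cT \<le> (\<Sum>y\<in>C - {z}. \<Sum>i\<in>I. exp_mistakes L h0 (replicate j (x, y) @ T i))"
        using Suc.IH[of "C - {z}" h0] Suc.prems cm by simp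
      have "of_nat (card I * gg (card C) (Suc j)) + of_nat (card C) * cT =
          of_nat (m * card I) + (of_nat (card I * gg m j) + of_nat m * cT) + (cT :: ennreal)"
        by (simp add: m gg_in algebra_simps)
      also have "\<dots> \<le> (\<Sum>y\<in>C - {z}. \<Sum>i\<in>I. F y i z) + (\<Sum>i\<in>I. F z i z)"
        using e b a by (metis add_mono add_left_mono)
      finally show ?thesis using s by (simp add: add.commute)
    qed
  qed
  then show ?case using eq by simp
qed

definition Ys :: "nat \<Rightarrow> nat \<Rightarrow> nat list set" where
  "Ys k d = {ys. set ys \<subseteq> {1..k} \<and> length ys = d}"

definition advS :: "nat \<Rightarrow> nat list list \<Rightarrow> nat list \<Rightarrow> (nat list \<times> nat) list" where
  "advS k xs ys = concat (map (\<lambda>(x, y). replicate (k - 1) (x, y)) (zip xs ys))"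

lemma advS_Cons: "advS k (x # xs) (y # ys) = replicate (k - 1) (x, y) @ advS k xs ys"
  by (simp add: advS_def)

lemma sum_Ys_Suc:
  "(\<Sum>ys\<in>Ys k (Suc d). f ys) = (\<Sum>y\<in>{1..k}. \<Sum>ys\<in>Ys k d. f (y # ys))"
proof -
  have inj: "inj_on (\<lambda>(xs, n). n # xs) (Ys k d \<times> {1..k})"
    by (auto simp: inj_on_def)
  have "(\<Sum>ys\<in>Ys k (Suc d). f ys) = (\<Sum>p\<in>Ys k d \<times> {1..k}. f ((\<lambda>(xs, n). n # xs) p))"
    unfolding Ys_def lists_length_Suc_eq using inj[unfolded Ys_def]
    by (subst sum.reindex) auto
  also have "\<dots> = (\<Sum>ys\<in>Ys k d. \<Sum>y\<in>{1..k}. f (y # ys))"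
    unfolding sum.cartesian_product by (simp add: split_def)
  also have "\<dots> = (\<Sum>y\<in>{1..k}. \<Sum>ys\<in>Ys k d. f (y # ys))"
    by (rule sum.swap)
  finally show ?thesis .
qed

lemma finite_Ys: "finite (Ys k d)"
  unfolding Ys_def by (rule finite_lists_length_eq) simp

lemma card_Ys: "card (Ys k d) = k ^ d"
  unfolding Ys_def by (subst card_lists_length_eq) simp_all

lemma blocks:
  "of_nat (length xs * k ^ (length xs - 1) * gg k (k - 1))
     \<le> (\<Sum>ys\<in>Ys k (length xs). exp_mistakes L h (advS k xs ys))"
proof (induction xs arbitrary: h)
  case Nil
  then show ?case by simp
next
  case (Cons x xs)
  define d where "d = length xs"
  define G where "G = gg k (k - 1)"
  have hT: "\<And>h. of_nat (d * k ^ (d - 1) * G) \<le> (\<Sum>ys\<in>Ys k d. exp_mistakes L h (advS k xs ys))"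
    using Cons.IH by (simp add: d_def G_def)
  have B: "of_nat (card (Ys k d) * gg (card {1..k}) (k - 1)) + of_nat (card {1..k}) * of_nat (d * k ^ (d - 1) * G)
     \<le> (\<Sum>y\<in>{1..k}. \<Sum>ys\<in>Ys k d. exp_mistakes L h (replicate (k - 1) (x, y) @ advS k xs ys))"
    by (rule block[OF finite_Ys hT]) simp
  have nat_eq: "k ^ d * G + k * (d * k ^ (d - 1) * G) = Suc d * k ^ d * G"
  proof (cases d)
    case 0
    then show ?thesis by simp
  next
    case (Suc e)
    then show ?thesis by (simp add: algebra_simps)
  qed
  have "(of_nat (length (x # xs) * k ^ (length (x # xs) - 1) * gg k (k - 1)) :: ennreal)
      = of_nat (k ^ d * G + k * (d * k ^ (d - 1) * G))"
    by (simp only: nat_eq) (simp add: d_def G_def)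
  also have "\<dots> = of_nat (card (Ys k d) * gg (card {1..k}) (k - 1)) + of_nat (card {1..k}) * of_nat (d * k ^ (d - 1) * G)"
    by (simp add: card_Ys G_def)
  also have "\<dots> \<le> (\<Sum>y\<in>{1..k}. \<Sum>ys\<in>Ys k d. exp_mistakes L h (advS k (x # xs) (y # ys)))"
    using B by (simp add: advS_Cons)
  also have "\<dots> = (\<Sum>ys\<in>Ys k (length (x # xs)). exp_mistakes L h (advS k (x # xs) ys))"
    by (simp add: sum_Ys_Suc d_def)
  finally show ?case .
qed

fun idx :: "nat \<Rightarrow> nat list \<Rightarrow> nat" where
  "idx k [] = 0"
| "idx k (y # ys) = (y - 1) + k * idx k ys"

lemma idx_lt: "set ys \<subseteq> {1..k} \<Longrightarrow> idx k ys < k ^ length ys"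
proof (induction ys)
  case Nil
  then show ?case by simp
next
  case (Cons y ys)
  then have y: "1 \<le> y" "y \<le> k" and ih: "idx k ys + 1 \<le> k ^ length ys" by auto
  have "(y - 1) + k * idx k ys < k + k * idx k ys" using y by simp
  also have "\<dots> = k * (idx k ys + 1)" by (simp add: algebra_simps)
  also have "\<dots> \<le> k * k ^ length ys" using ih by (rule mult_le_mono2)
  finally show ?case by simp
qed

lemma idx_digit: "set ys \<subseteq> {1..k} \<Longrightarrow> t < length ys \<Longrightarrow> (idx k ys div k ^ t) mod k + 1 = ys ! t"
proof (induction ys arbitrary: t)
  case Nil
  then show ?case by simp
next
  case (Cons y ys)
  then have y: "1 \<le> y" "y \<le> k" by auto
  show ?case
  proof (cases t)
    case 0
    have "(y - 1 + k * idx k ys) mod k = (y - 1) mod k" by simp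
    also have "\<dots> = y - 1" using y by simp
    finally show ?thesis using y 0 by simp
  next
    case (Suc t')
    have "idx k (y # ys) div k ^ t = ((y - 1) + k * idx k ys) div k div k ^ t'"
      by (simp add: Suc div_mult2_eq)
    also have "((y - 1) + k * idx k ys) div k = idx k ys"
    proof -
      obtain y' where y': "y = Suc y'" using y by (cases y) auto
      have "y' < k" using y y' by simp
      then have "(y' + k * idx k ys) div k = idx k ys" by simp
      then show ?thesis using y' by simp
    qed
    finally show ?thesis using Cons Suc by simp
  qed
qed

lemma sum_id_lt: "2 * (\<Sum>p<m. p) = m * (m - 1::nat)"
proof (induct m)
  case 0
  then show ?case by simp
next
  case (Suc m)
  then show ?case by (cases m) (simp_all add: algebra_simps)
qed

lemma gg_val: "1 \<le> k \<Longrightarrow> 2 * gg k (k - 1) = k * (k - 1)"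
proof -
  assume "1 \<le> k"
  have "gg k (k - 1) = (\<Sum>p<k. p)" unfolding gg_def by (intro sum.cong) auto
  then show ?thesis using sum_id_lt by simp
qed

theorem lemma4p10:
  fixes n k :: nat
  assumes "2 \<le> k" and "k \<le> n"
  shows "ennreal ((real k - 1) / 2 * real_of_int \<lfloor>log (real k) (real n)\<rfloor>) \<le> opt_bandit_obl n k"
proof -
  define d where "d = nat \<lfloor>log (real k) (real n)\<rfloor>"
  have k1: "1 < real k" using assms by simp
  have n0: "0 < real n" using assms by simp
  have lg: "1 \<le> log (real k) (real n)"
  proof -
    have "log (real k) (real k) \<le> log (real k) (real n)"
      using k1 n0 assms by (subst log_le_cancel_iff) auto
    then show ?thesis using k1 by simp
  qed
  have fl: "real_of_int \<lfloor>log (real k) (real n)\<rfloor> = real d"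
    using lg unfolding d_def by simp
  have dle: "real d \<le> log (real k) (real n)"
    using fl by (metis of_int_floor_le)
  have kd: "k ^ d \<le> n"
  proof -
    have "real (k ^ d) = real k powr real d" using k1 by (simp add: powr_realpow)
    also have "\<dots> \<le> real k powr log (real k) (real n)"
      using k1 dle by (intro powr_mono) auto
    also have "\<dots> = real n" using k1 n0 by simp
    finally show ?thesis by linarith
  qed
  define inst where "inst = (\<lambda>t. map (\<lambda>i. (i div k ^ t) mod k + 1) [0..<n])"
  define xs where "xs = map inst [0..<d]"
  have lxs: "length xs = d" by (simp add: xs_def)
  have realz: "realizable_seq n k (advS k xs ys)" if ys: "ys \<in> Ys k d" for ys
  proof -
    have ys1: "set ys \<subseteq> {1..k}" and ys2: "length ys = d" using ys by (auto simp: Ys_def)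
    have mem: "\<exists>t<d. a = inst t \<and> b = ys ! t" if "(a, b) \<in> set (advS k xs ys)" for a b
    proof -
      from that obtain p where p: "p \<in> set (zip xs ys)" and ab: "(a, b) \<in> set (replicate (k - 1) p)"
        unfolding advS_def by (auto simp: case_prod_beta)
      from p obtain t where t: "t < d" "p = (xs ! t, ys ! t)"
        using lxs ys2 by (auto simp: set_zip)
      have "(a, b) = p" using ab by (auto split: if_splits)
      then show ?thesis using t by (auto simp: xs_def)
    qed
    have kpos: "0 < k" using assms by simp
    have iok: "instance_ok n k (inst t)" for t
      unfolding instance_ok_def inst_def using kpos by (auto simp: Suc_le_eq)
    have il: "idx k ys < n" using idx_lt[OF ys1] ys2 kd by simp
    show ?thesis unfolding realizable_seq_def
    proof (intro conjI)
      show "\<forall>(x, y)\<in>set (advS k xs ys). instance_ok n k x \<and> y \<in> {1..k}"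
      proof (clarify)
        fix a b assume "(a, b) \<in> set (advS k xs ys)"
        then obtain t where "t < d" "a = inst t" "b = ys ! t" using mem by blast
        then show "instance_ok n k a \<and> b \<in> {1..k}" using iok ys1 ys2
          by (metis nth_mem subsetD)
      qed
      show "\<exists>i<n. \<forall>(x, y)\<in>set (advS k xs ys). y = x ! i"
      proof (intro exI[of _ "idx k ys"] conjI il ballI, clarify)
        fix a b assume "(a, b) \<in> set (advS k xs ys)"
        then obtain t where t: "t < d" "a = inst t" "b = ys ! t" using mem by blast
        have "a ! idx k ys = (idx k ys div k ^ t) mod k + 1" using t il by (simp add: inst_def)
        also have "\<dots> = ys ! t" using idx_digit[OF ys1] t ys2 by simp
        finally show "b = a ! idx k ys" using t by simp
      qed
    qed
  qed
  show ?thesis unfolding opt_bandit_obl_def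
  proof (rule INF_greatest)
    fix L assume "L \<in> {L. valid_learner k L}"
    define M where "M = (SUP S\<in>{S. realizable_seq n k S}. exp_mistakes L [] S)"
    have each: "exp_mistakes L [] (advS k xs ys) \<le> M" if "ys \<in> Ys k d" for ys
      unfolding M_def using realz[OF that] by (intro SUP_upper) auto
    have "of_nat (d * k ^ (d - 1) * gg k (k - 1)) \<le> (\<Sum>ys\<in>Ys k d. exp_mistakes L [] (advS k xs ys))"
      using blocks[of xs k L "[]"] lxs by simp
    also have "\<dots> \<le> (\<Sum>ys\<in>Ys k d. M)" by (intro sum_mono each)
    also have "\<dots> = of_nat (k ^ d) * M" by (simp add: card_Ys)
    finally have B: "of_nat (d * k ^ (d - 1) * gg k (k - 1)) \<le> of_nat (k ^ d) * M" .
    have G: "real (gg k (k - 1)) = real k * (real k - 1) / 2"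
    proof -
      have "real (2 * gg k (k - 1)) = real (k * (k - 1))" using gg_val assms by simp
      then show ?thesis using assms by (simp add: of_nat_diff)
    qed
    have req: "real (d * k ^ (d - 1) * gg k (k - 1)) = real (k ^ d) * ((real k - 1) / 2 * real d)"
    proof (cases d)
      case 0
      then show ?thesis by simp
    next
      case (Suc e)
      have G': "real (gg k (k - Suc 0)) = real k * (real k - 1) / 2" using G by simp
      show ?thesis using Suc by (simp add: G' field_simps)
    qed
    have "(of_nat (d * k ^ (d - 1) * gg k (k - 1)) :: ennreal) = of_nat (k ^ d) * ennreal ((real k - 1) / 2 * real d)"
      using assms by (simp only: ennreal_of_nat_eq_real_of_nat req ennreal_mult'[symmetric])
    with B have "of_nat (k ^ d) * ennreal ((real k - 1) / 2 * real d) \<le> of_nat (k ^ d) * M" by simp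
    then have "ennreal ((real k - 1) / 2 * real d) \<le> M"
    proof -
      have nt: "(of_nat (k ^ d) :: ennreal) \<noteq> top" using ennreal_of_nat_neq_top by blast
      have nz: "(of_nat (k ^ d) :: ennreal) \<noteq> 0" using assms by simp
      show ?thesis using ennreal_mult_le_mult_iff[OF nz nt] \<open>of_nat (k ^ d) * ennreal ((real k - 1) / 2 * real d) \<le> of_nat (k ^ d) * M\<close> by blast
    qed
    then show "ennreal ((real k - 1) / 2 * real_of_int \<lfloor>log (real k) (real n)\<rfloor>) \<le> M"
      using fl by simp
  qed
qed

end
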